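(* Let $C_n$ denote the cycle on $n \geq 3$ vertices. Then $\Gamma_b(C_3) = 1$, and for $n > 3$, \[ \Gamma_b(C_n) = \begin{cases} n-2 & \text{if } n \text{ is even},\\ n-3 & \text{if } n \text{ is odd}.\end{cases} \]
   Context: Let $G=(V,E)$ be a finite connected graph with distance $d(u,v)$. The eccentricity of $v$ is $e(v)=\max_{w\in V} d(v,w)$ and $\mathrm{diam}(G)=\max_v e(v)$. A broadcast on $G$ is a function $f: V \to \{0,1,\dots,\mathrm{diam}(G)\}$ with $f(v) \leq e(v)$ for all $v$; its cost is $\sum_{v\in V} f(v)$. The broadcast $f$ is dominating if for every $u \in V$ there is $v$ with $f(v)\geq 1$ and $d(u,v) \leq f(v)$. A dominating broadcast $f$ is minimal if decreasing the value $f(v)$ of any vertex $v$ with $f(v)>0$ yields a broadcast that is not dominating. The upper broadcast domination number $\Gamma_b(G)$ is the maximum cost of a minimal dominating broadcast on $G$. *)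

theory Defs
  imports Main
begin

inductive walk :: "'a set \<Rightarrow> ('a \<Rightarrow> 'a \<Rightarrow> bool) \<Rightarrow> 'a \<Rightarrow> nat \<Rightarrow> 'a \<Rightarrow> bool"
  for V E where
  walk_refl: "u \<in> V \<Longrightarrow> walk V E u 0 u"
| walk_step: "walk V E u k w \<Longrightarrow> v \<in> V \<Longrightarrow> E w v \<Longrightarrow> walk V E u (Suc k) v"

definition graph_dist :: "'a set \<Rightarrow> ('a \<Rightarrow> 'a \<Rightarrow> bool) \<Rightarrow> 'a \<Rightarrow> 'a \<Rightarrow> nat" where
  "graph_dist V E u v = (LEAST k. walk V E u k v)"

definition connected_graph :: "'a set \<Rightarrow> ('a \<Rightarrow> 'a \<Rightarrow> bool) \<Rightarrow> bool" where
  "connected_graph V E \<longleftrightarrow> finite V \<and> V \<noteq> {} \<and>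
     (\<forall>u v. E u v \<longrightarrow> u \<in> V \<and> v \<in> V \<and> u \<noteq> v \<and> E v u) \<and>
     (\<forall>u\<in>V. \<forall>v\<in>V. \<exists>k. walk V E u k v)"

definition ecc :: "'a set \<Rightarrow> ('a \<Rightarrow> 'a \<Rightarrow> bool) \<Rightarrow> 'a \<Rightarrow> nat" where
  "ecc V E v = Max ((graph_dist V E v) ` V)"

definition diam :: "'a set \<Rightarrow> ('a \<Rightarrow> 'a \<Rightarrow> bool) \<Rightarrow> nat" where
  "diam V E = Max ((ecc V E) ` V)"

text \<open>A broadcast: f v \<le> e(v) on V; f is zero outside V (a convention so that
the cost, a sum over V, captures f entirely). Since e(v) \<le> diam, the range
condition f v \<in> {0..diam} is implied.\<close>

definition broadcast :: "'a set \<Rightarrow> ('a \<Rightarrow> 'a \<Rightarrow> bool) \<Rightarrow> ('a \<Rightarrow> nat) \<Rightarrow> bool" where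
  "broadcast V E f \<longleftrightarrow> (\<forall>v\<in>V. f v \<le> diam V E \<and> f v \<le> ecc V E v) \<and> (\<forall>v. v \<notin> V \<longrightarrow> f v = 0)"

definition bcost :: "'a set \<Rightarrow> ('a \<Rightarrow> nat) \<Rightarrow> nat" where
  "bcost V f = (\<Sum>v\<in>V. f v)"

definition dominating_broadcast :: "'a set \<Rightarrow> ('a \<Rightarrow> 'a \<Rightarrow> bool) \<Rightarrow> ('a \<Rightarrow> nat) \<Rightarrow> bool" where
  "dominating_broadcast V E f \<longleftrightarrow> broadcast V E f \<and>
     (\<forall>u\<in>V. \<exists>v\<in>V. f v \<ge> 1 \<and> graph_dist V E u v \<le> f v)"

definition minimal_dominating_broadcast :: "'a set \<Rightarrow> ('a \<Rightarrow> 'a \<Rightarrow> bool) \<Rightarrow> ('a \<Rightarrow> nat) \<Rightarrow> bool" where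
  "minimal_dominating_broadcast V E f \<longleftrightarrow> dominating_broadcast V E f \<and>
     (\<forall>v\<in>V. \<forall>c. f v > 0 \<longrightarrow> c < f v \<longrightarrow> \<not> dominating_broadcast V E (f(v := c)))"

definition upper_broadcast_number :: "'a set \<Rightarrow> ('a \<Rightarrow> 'a \<Rightarrow> bool) \<Rightarrow> nat" where
  "upper_broadcast_number V E =
     Max (bcost V ` {f. minimal_dominating_broadcast V E f})"

definition cycle_adj :: "nat \<Rightarrow> nat \<Rightarrow> nat \<Rightarrow> bool" where
  "cycle_adj n i j \<longleftrightarrow> i < n \<and> j < n \<and> (j = (i + 1) mod n \<or> i = (j + 1) mod n)"

end

theory Submission
  imports Defs
begin

definition cd :: "nat \<Rightarrow> nat \<Rightarrow> nat \<Rightarrow> nat" where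
  "cd n u v = min (if u \<le> v then v - u else u - v) (n - (if u \<le> v then v - u else u - v))"

definition sc :: "nat \<Rightarrow> nat \<Rightarrow> nat" where
  "sc n x = (if x + 1 = n then 0 else x + 1)"

lemma mod_suc_lin: "x < n \<Longrightarrow> (x + 1) mod n = sc n x"
  unfolding sc_def by (auto simp: mod_if)

lemma cycle_adj_iff: "cycle_adj n i j \<longleftrightarrow> i < n \<and> j < n \<and> (j = sc n i \<or> i = sc n j)"
  unfolding cycle_adj_def using mod_suc_lin by auto

lemma walk_in: "walk V E u k v \<Longrightarrow> u \<in> V \<and> v \<in> V"
  by (induction rule: walk.induct) auto

lemma walk_trans: "walk V E w b v \<Longrightarrow> walk V E u a w \<Longrightarrow> walk V E u (a + b) v"
  by (induction rule: walk.induct) (auto intro: walk.intros)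

lemma walk_prepend: "E a u \<Longrightarrow> a \<in> V \<Longrightarrow> walk V E u k v \<Longrightarrow> walk V E a (Suc k) v"
proof -
  assume h: "E a u" "a \<in> V" "walk V E u k v"
  have "u \<in> V" using walk_in[OF h(3)] by auto
  have "walk V E a (Suc 0) u" by (rule walk_step[OF walk_refl]) (use h \<open>u\<in>V\<close> in auto)
  from walk_trans[OF h(3) this] show ?thesis by simp
qed

lemma walk_rev:
  assumes sym: "\<And>x y. E x y \<Longrightarrow> E y x"
  shows "walk V E u k v \<Longrightarrow> walk V E v k u"
proof (induction rule: walk.induct)
  case (walk_refl u) then show ?case by (rule walk.walk_refl)
next
  case (walk_step u k w v) then show ?case using walk_prepend sym by metis
qed

lemma cyc_sym: "cycle_adj n x y \<Longrightarrow> cycle_adj n y x"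
  unfolding cycle_adj_def by auto

lemma fwd_walk: "u < n \<Longrightarrow> walk {..<n} (cycle_adj n) u i ((u + i) mod n)"
proof (induction i)
  case 0 then show ?case by (auto intro: walk.intros)
next
  case (Suc i)
  have n: "n > 0" using Suc by auto
  have "cycle_adj n ((u + i) mod n) ((u + Suc i) mod n)"
    unfolding cycle_adj_def using n by (auto simp: mod_simps)
  then show ?case using Suc n by (auto intro: walk.intros)
qed

lemma cd_adj: "cycle_adj n w v \<Longrightarrow> u < n \<Longrightarrow> cd n u v \<le> cd n u w + 1"
  unfolding cycle_adj_iff cd_def sc_def by (auto split: if_splits)

lemma walk_lower: "walk {..<n} (cycle_adj n) u k v \<Longrightarrow> cd n u v \<le> k"
proof (induction rule: walk.induct)
  case (walk_refl u) then show ?case by (simp add: cd_def)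
next
  case (walk_step u k w v)
  have "u < n" using walk_in[OF walk_step(1)] by simp
  with cd_adj[OF walk_step(3) \<open>u < n\<close>] walk_step(4) show ?case by linarith
qed

lemma walk_cd: assumes "u < n" "v < n" shows "walk {..<n} (cycle_adj n) u (cd n u v) v"
proof -
  have A: "walk {..<n} (cycle_adj n) u (v - u) v" if "u \<le> v" "u < n" "v < n" for u v
    using fwd_walk[of u n "v - u"] that by simp
  have B: "walk {..<n} (cycle_adj n) u (n - (v - u)) v" if "u \<le> v" "u < n" "v < n" for u v
  proof -
    have w: "walk {..<n} (cycle_adj n) v (n - (v - u)) ((v + (n - (v - u))) mod n)"
      using fwd_walk[of v n "n - (v - u)"] that by blast
    have e: "(v + (n - (v - u))) mod n = u" using that by simp
    show ?thesis using walk_rev[OF cyc_sym w[unfolded e]] .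
  qed
  show ?thesis
  proof (cases "u \<le> v")
    case True then show ?thesis using A B assms by (simp add: cd_def min_def)
  next
    case False
    then have v: "v \<le> u" by simp
    have "walk {..<n} (cycle_adj n) u (u - v) v"
      using walk_rev[OF cyc_sym A[OF v assms(2,1)]] .
    moreover have "walk {..<n} (cycle_adj n) u (n - (u - v)) v"
      using walk_rev[OF cyc_sym B[OF v assms(2,1)]] .
    ultimately show ?thesis using False by (simp add: cd_def min_def)
  qed
qed

lemma gd_cd: assumes "u < n" "v < n" shows "graph_dist {..<n} (cycle_adj n) u v = cd n u v"
  unfolding graph_dist_def
proof (rule Least_equality)
  show "walk {..<n} (cycle_adj n) u (cd n u v) v" by (rule walk_cd[OF assms])
next
  fix y assume "walk {..<n} (cycle_adj n) u y v" then show "cd n u v \<le> y" by (rule walk_lower)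
qed

lemma cd_sym: "cd n u v = cd n v u"
  unfolding cd_def by auto

lemma cd_self[simp]: "cd n u u = 0"
  unfolding cd_def by auto

lemma cd_zero: "cd n u v = 0 \<Longrightarrow> u < n \<Longrightarrow> v < n \<Longrightarrow> u = v"
  unfolding cd_def by (auto simp: min_def split: if_splits)

lemma cd_le: "cd n u v \<le> n div 2"
proof -
  have "n = 2 * (n div 2) + n mod 2" by simp
  moreover have "n mod 2 < 2" by simp
  ultimately show ?thesis unfolding cd_def min_def by (auto split: if_splits)
qed

lemma cd_tri: assumes "a < n" "b < n" "c < n" shows "cd n a c \<le> cd n a b + cd n b c"
proof -
  have "walk {..<n} (cycle_adj n) a (cd n a b + cd n b c) c"
    using walk_trans[OF walk_cd[OF assms(2,3)] walk_cd[OF assms(1,2)]] .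
  then show ?thesis by (rule walk_lower)
qed

lemma sc_lt: "v < n \<Longrightarrow> sc n v < n"
  unfolding sc_def by auto

lemma cd_sc: "v < n \<Longrightarrow> cd n v (sc n v) \<le> 1"
  unfolding sc_def cd_def by auto

lemma sc_inj: "v < n \<Longrightarrow> w < n \<Longrightarrow> sc n v = sc n w \<Longrightarrow> v = w"
  unfolding sc_def by (auto split: if_splits)

lemma sc_ne: "2 \<le> n \<Longrightarrow> v < n \<Longrightarrow> sc n v \<noteq> v"
  unfolding sc_def by auto

lemma geo: "walk {..<n} (cycle_adj n) a k b \<Longrightarrow> k = cd n a b \<Longrightarrow>
   k + 1 \<le> card {x. x < n \<and> cd n a x + cd n x b = cd n a b}"
proof (induction rule: walk.induct)
  case (walk_refl a)
  then have "a \<in> {x. x < n \<and> cd n a x + cd n x a = cd n a a}" by simp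
  moreover have "finite {x. x < n \<and> cd n a x + cd n x a = cd n a a}" by simp
  ultimately have "card {x. x < n \<and> cd n a x + cd n x a = cd n a a} > 0"
    by (auto simp: card_gt_0_iff)
  then show ?case using walk_refl(2) by simp
next
  case (walk_step u k w v)
  have un: "u < n" "w < n" using walk_in[OF walk_step(1)] by auto
  have vn: "v < n" using walk_step(2) by simp
  have a: "cd n u w \<le> k" using walk_lower[OF walk_step(1)] .
  have b: "cd n w v \<le> 1" using cd_adj[OF walk_step(3) un(2)] by simp
  have c: "cd n u v \<le> cd n u w + cd n w v" using cd_tri[OF un(1) un(2) vn] .
  have k: "k = cd n u w" using a b c walk_step(5) by linarith
  define G where "G = {x. x < n \<and> cd n u x + cd n x w = cd n u w}"
  define H where "H = {x. x < n \<and> cd n u x + cd n x v = cd n u v}"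
  have IH: "k + 1 \<le> card G" using walk_step(4)[OF k] unfolding G_def .
  have sub: "insert v G \<subseteq> H"
  proof
    fix x assume "x \<in> insert v G"
    then show "x \<in> H"
    proof
      assume "x = v" then show ?thesis using vn unfolding H_def by simp
    next
      assume x: "x \<in> G"
      then have xn: "x < n" and e: "cd n u x + cd n x w = cd n u w" unfolding G_def by auto
      have "cd n x v \<le> cd n x w + cd n w v" using cd_tri[OF xn un(2) vn] .
      moreover have "cd n u v \<le> cd n u x + cd n x v" using cd_tri[OF un(1) xn vn] .
      ultimately have "cd n u x + cd n x v = cd n u v" using e b k walk_step(5) by linarith
      then show ?thesis using xn unfolding H_def by simp
    qed
  qed
  have vG: "v \<notin> G" using k walk_step(5) unfolding G_def by auto
  have "finite H" unfolding H_def by simp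
  then have "card (insert v G) \<le> card H" using sub by (rule card_mono)
  moreover have "finite G" unfolding G_def by simp
  ultimately have "card G + 1 \<le> card H" using vG by simp
  then show ?case using IH walk_step(5) unfolding H_def by linarith
qed

lemma ecc_cyc: assumes "v < n" shows "ecc {..<n} (cycle_adj n) v = n div 2"
proof -
  have img: "graph_dist {..<n} (cycle_adj n) v ` {..<n} = cd n v ` {..<n}"
    using gd_cd[OF assms] by (intro image_cong) auto
  define x where "x = (if v + n div 2 < n then v + n div 2 else v + n div 2 - n)"
  have "n = 2 * (n div 2) + n mod 2" by simp
  moreover have "n mod 2 < 2" by simp
  ultimately have xn: "x < n" and cx: "cd n v x = n div 2"
    using assms unfolding x_def cd_def min_def by (auto split: if_splits)
  show ?thesis unfolding ecc_def img
  proof (rule Max_eqI)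
    show "finite (cd n v ` {..<n})" by simp
    show "y \<le> n div 2" if "y \<in> cd n v ` {..<n}" for y using that cd_le by auto
    show "n div 2 \<in> cd n v ` {..<n}" using xn cx by force
  qed
qed

lemma diam_cyc: assumes "0 < n" shows "diam {..<n} (cycle_adj n) = n div 2"
proof -
  have "ecc {..<n} (cycle_adj n) ` {..<n} = {n div 2}"
    using ecc_cyc assms by force
  then show ?thesis unfolding diam_def by simp
qed

lemma dom_iff: assumes "0 < n" shows
  "dominating_broadcast {..<n} (cycle_adj n) f \<longleftrightarrow>
    (\<forall>v<n. f v \<le> n div 2) \<and> (\<forall>v. \<not> v < n \<longrightarrow> f v = 0) \<and>
    (\<forall>u<n. \<exists>v<n. 1 \<le> f v \<and> cd n u v \<le> f v)"
  unfolding dominating_broadcast_def broadcast_def diam_cyc[OF assms]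
  using ecc_cyc gd_cd by auto

lemma mdb_props: assumes n: "0 < n" and m: "minimal_dominating_broadcast {..<n} (cycle_adj n) f"
  shows "(\<forall>v<n. f v \<le> n div 2) \<and> (\<forall>v. \<not> v < n \<longrightarrow> f v = 0) \<and>
    (\<forall>v<n. 1 \<le> f v \<longrightarrow> (\<exists>u<n. cd n u v \<le> f v \<and>
        (\<forall>w<n. w \<noteq> v \<longrightarrow> 1 \<le> f w \<longrightarrow> f w < cd n u w) \<and> (2 \<le> f v \<longrightarrow> cd n u v = f v)))"
proof -
  have d: "dominating_broadcast {..<n} (cycle_adj n) f" using m unfolding minimal_dominating_broadcast_def by simp
  have Bd: "\<forall>v<n. f v \<le> n div 2" and Z: "\<forall>v. \<not> v < n \<longrightarrow> f v = 0"
    and D: "\<forall>u<n. \<exists>v<n. 1 \<le> f v \<and> cd n u v \<le> f v" using d dom_iff[OF n] by auto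
  have P: "\<exists>u<n. cd n u v \<le> f v \<and>
        (\<forall>w<n. w \<noteq> v \<longrightarrow> 1 \<le> f w \<longrightarrow> f w < cd n u w) \<and> (2 \<le> f v \<longrightarrow> cd n u v = f v)"
    if v: "v < n" "1 \<le> f v" for v
  proof -
    define g where "g = f(v := f v - 1)"
    have "\<not> dominating_broadcast {..<n} (cycle_adj n) g"
      using m v unfolding minimal_dominating_broadcast_def g_def by auto
    moreover have "(\<forall>w<n. g w \<le> n div 2) \<and> (\<forall>w. \<not> w < n \<longrightarrow> g w = 0)"
      using Bd Z v unfolding g_def by auto
    ultimately obtain u where u: "u < n" and nd: "\<forall>w<n. \<not> (1 \<le> g w \<and> cd n u w \<le> g w)"
      using dom_iff[OF n, of g] by blast
    obtain w where w: "w < n" "1 \<le> f w" "cd n u w \<le> f w" using D u by blast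
    have wv: "w = v"
    proof (rule ccontr)
      assume "w \<noteq> v" then have "g w = f w" unfolding g_def by simp
      then show False using nd w by auto
    qed
    have 1: "cd n u v \<le> f v" using w wv by simp
    have 2: "\<forall>w<n. w \<noteq> v \<longrightarrow> 1 \<le> f w \<longrightarrow> f w < cd n u w"
      using nd unfolding g_def by auto
    have 3: "2 \<le> f v \<longrightarrow> cd n u v = f v"
      using nd[rule_format, OF v(1)] 1 unfolding g_def by auto
    show ?thesis using u 1 2 3 by blast
  qed
  show ?thesis using Bd Z P by blast
qed

lemma target_bounds:
  fixes n :: nat assumes "n \<ge> 3"
  shows "n div 2 \<le> (if n = 3 then 1 else if even n then n - 2 else n - 3)"
    and "2 * (n div 2 - 1) \<le> (if n = 3 then 1 else if even n then n - 2 else n - 3)"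
    and "n - 3 \<le> (if n = 3 then 1 else if even n then n - 2 else n - 3)"
proof -
  have "n div 2 \<le> (if n = 3 then 1 else if even n then n - 2 else n - 3) \<and>
    2 * (n div 2 - 1) \<le> (if n = 3 then 1 else if even n then n - 2 else n - 3) \<and>
    n - 3 \<le> (if n = 3 then 1 else if even n then n - 2 else n - 3)"
  proof (cases "even n")
    case True
    then obtain q where q: "n = 2 * q" by (rule evenE)
    then have "n div 2 = q" by simp
    then show ?thesis using q assms True by auto
  next
    case False
    then obtain q where q: "n = 2 * q + 1" by (rule oddE)
    then have "n div 2 = q" by simp
    then show ?thesis using q assms False by auto
  qed
  then show "n div 2 \<le> (if n = 3 then 1 else if even n then n - 2 else n - 3)"
    and "2 * (n div 2 - 1) \<le> (if n = 3 then 1 else if even n then n - 2 else n - 3)"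
    and "n - 3 \<le> (if n = 3 then 1 else if even n then n - 2 else n - 3)" by auto
qed

lemma core:
  fixes n :: nat and f :: "nat \<Rightarrow> nat"
  assumes n: "n \<ge> 3"
    and Bd: "\<forall>v<n. f v \<le> n div 2" and Z: "\<forall>v. \<not> v < n \<longrightarrow> f v = 0"
    and P: "\<forall>v<n. 1 \<le> f v \<longrightarrow> (\<exists>u<n. cd n u v \<le> f v \<and>
        (\<forall>w<n. w \<noteq> v \<longrightarrow> 1 \<le> f w \<longrightarrow> f w < cd n u w) \<and> (2 \<le> f v \<longrightarrow> cd n u v = f v))"
  shows "(\<Sum>v<n. f v) \<le> (if n = 3 then 1 else if even n then n - 2 else n - 3)"
proof -
  define B where "B = {v. v < n \<and> 1 \<le> f v}"
  define Pr where "Pr v u \<longleftrightarrow> u < n \<and> cd n u v \<le> f v \<and>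
        (\<forall>w<n. w \<noteq> v \<longrightarrow> 1 \<le> f w \<longrightarrow> f w < cd n u w) \<and> (2 \<le> f v \<longrightarrow> cd n u v = f v)" for v u
  have "\<forall>v\<in>B. \<exists>u. Pr v u" using P unfolding B_def Pr_def by blast
  then obtain pu where pu: "\<forall>v\<in>B. Pr v (pu v)" by (metis bchoice)
  define Q where "Q v = (if pu v = v then {v, sc n v}
      else {x. x < n \<and> cd n v x + cd n x (pu v) = cd n v (pu v)})" for v
  have Bsub: "B \<subseteq> {..<n}" unfolding B_def by auto
  have finB: "finite B" using Bsub finite_subset by blast
  have Qsub: "Q v \<subseteq> {..<n}" if "v \<in> B" for v
    using that sc_lt unfolding Q_def B_def by auto
  have finQ: "finite (Q v)" if "v \<in> B" for v using Qsub[OF that] finite_subset by blast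
  have Qcard: "f v + 1 \<le> card (Q v)" if vB: "v \<in> B" for v
  proof -
    have vn: "v < n" and fv: "1 \<le> f v" using vB unfolding B_def by auto
    have pr: "Pr v (pu v)" using pu vB by blast
    show ?thesis
    proof (cases "pu v = v")
      case True
      then have "f v = 1" using pr fv unfolding Pr_def by auto
      moreover have "sc n v \<noteq> v" using sc_ne n vn by auto
      ultimately show ?thesis using True unfolding Q_def by simp
    next
      case False
      have un: "pu v < n" using pr unfolding Pr_def by simp
      have "cd n v (pu v) \<noteq> 0" using cd_zero[OF _ vn un] False by metis
      moreover have "cd n v (pu v) \<le> f v" "2 \<le> f v \<longrightarrow> cd n v (pu v) = f v"
        using pr cd_sym[of n v "pu v"] unfolding Pr_def by auto
      ultimately have e: "cd n v (pu v) = f v" using fv by linarith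
      have "cd n v (pu v) + 1 \<le> card (Q v)"
        using geo[OF walk_cd[OF vn un] refl] False unfolding Q_def by simp
      then show ?thesis using e by simp
    qed
  qed
  have GG: False if vB: "v \<in> B" and wB: "w \<in> B" and vw: "v \<noteq> w" and gv: "pu v \<noteq> v"
     and gw: "pu w \<noteq> w" and xv: "x \<in> Q v" and xw: "x \<in> Q w" for v w x
  proof -
    have vn: "v < n" and fv: "1 \<le> f v" using vB unfolding B_def by auto
    have wn: "w < n" and fw: "1 \<le> f w" using wB unfolding B_def by auto
    have prv: "Pr v (pu v)" and prw: "Pr w (pu w)" using pu vB wB by auto
    have uv: "pu v < n" and uw: "pu w < n" using prv prw unfolding Pr_def by auto
    have xn: "x < n" and ex: "cd n v x + cd n x (pu v) = cd n v (pu v)"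
      using xv gv unfolding Q_def by auto
    have ey: "cd n w x + cd n x (pu w) = cd n w (pu w)"
      using xw gw unfolding Q_def by auto
    have a1: "cd n (pu v) v \<le> f v" and a2: "f w < cd n (pu v) w" using prv vw fw wn unfolding Pr_def by auto
    have b1: "cd n (pu w) w \<le> f w" and b2: "f v < cd n (pu w) v" using prw vw fv vn unfolding Pr_def by auto
    have t1: "cd n (pu v) w \<le> cd n (pu v) x + cd n x w" using cd_tri[OF uv xn wn] .
    have t2: "cd n (pu w) v \<le> cd n (pu w) x + cd n x v" using cd_tri[OF uw xn vn] .
    show False using a1 a2 b1 b2 t1 t2 ex ey cd_sym[of n "pu v" x] cd_sym[of n x w]
      cd_sym[of n "pu w" x] cd_sym[of n x v] cd_sym[of n v "pu v"] cd_sym[of n w "pu w"] by linarith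
  qed
  have BG: False if vB: "v \<in> B" and wB: "w \<in> B" and vw: "v \<noteq> w" and gv: "pu v = v"
     and gw: "pu w \<noteq> w" and xv: "x \<in> Q v" and xw: "x \<in> Q w" for v w x
  proof -
    have vn: "v < n" and fv: "1 \<le> f v" using vB unfolding B_def by auto
    have wn: "w < n" and fw: "1 \<le> f w" using wB unfolding B_def by auto
    have prv: "Pr v (pu v)" and prw: "Pr w (pu w)" using pu vB wB by auto
    have uw: "pu w < n" using prw unfolding Pr_def by auto
    have a2: "f w < cd n v w" using prv vw fw wn gv unfolding Pr_def by auto
    have b1: "cd n (pu w) w \<le> f w" and b2: "f v < cd n (pu w) v" using prw vw fv vn unfolding Pr_def by auto
    have xn: "x < n" and ey: "cd n w x + cd n x (pu w) = cd n w (pu w)"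
      using xw gw unfolding Q_def by auto
    have "x = v \<or> x = sc n v" using xv gv unfolding Q_def by auto
    then show False
    proof
      assume "x = v"
      then have "cd n w v + cd n v (pu w) = cd n w (pu w)" using ey by simp
      then show False using a2 b1 cd_sym[of n w v] cd_sym[of n w "pu w"] by linarith
    next
      assume xs: "x = sc n v"
      have s1: "cd n v x \<le> 1" using cd_sc[OF vn] xs by simp
      have t: "cd n v w \<le> cd n v x + cd n x w" using cd_tri[OF vn xn wn] .
      have "cd n x (pu w) = 0" using s1 t a2 ey b1 cd_sym[of n x w] cd_sym[of n w "pu w"] by linarith
      then have "x = pu w" using cd_zero xn uw by blast
      then show False using b2 s1 fv cd_sym[of n v x] by simp
    qed
  qed
  have BB: False if vB: "v \<in> B" and wB: "w \<in> B" and vw: "v \<noteq> w" and gv: "pu v = v"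
     and gw: "pu w = w" and xv: "x \<in> Q v" and xw: "x \<in> Q w" for v w x
  proof -
    have vn: "v < n" and fv: "1 \<le> f v" using vB unfolding B_def by auto
    have wn: "w < n" and fw: "1 \<le> f w" using wB unfolding B_def by auto
    have prv: "Pr v (pu v)" and prw: "Pr w (pu w)" using pu vB wB by auto
    have a2: "f w < cd n v w" using prv vw fw wn gv unfolding Pr_def by auto
    have b2: "f v < cd n w v" using prw vw fv vn gw unfolding Pr_def by auto
    have "(x = v \<or> x = sc n v) \<and> (x = w \<or> x = sc n w)" using xv xw gv gw unfolding Q_def by auto
    then show False
      using vw a2 b2 cd_sc[OF vn] cd_sc[OF wn] fv fw sc_inj[OF vn wn] by auto
  qed
  have disj: "Q v \<inter> Q w = {}" if "v \<in> B" "w \<in> B" "v \<noteq> w" for v w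
  proof (rule ccontr)
    assume "Q v \<inter> Q w \<noteq> {}"
    then obtain x where "x \<in> Q v" "x \<in> Q w" by blast
    then show False using GG[OF that] BG[OF that] BG[OF that(2,1) that(3)[symmetric]] BB[OF that]
      by (cases "pu v = v"; cases "pu w = w") auto
  qed
  have "(\<Sum>v\<in>B. f v + 1) \<le> (\<Sum>v\<in>B. card (Q v))" using Qcard by (rule sum_mono)
  also have "\<dots> = card (\<Union>v\<in>B. Q v)" using card_UN_disjoint[of B Q] finB finQ disj by simp
  also have "\<dots> \<le> card {..<n}" using Qsub by (intro card_mono) auto
  finally have "(\<Sum>v\<in>B. f v + 1) \<le> n" by simp
  moreover have "(\<Sum>v\<in>B. f v + 1) = (\<Sum>v\<in>B. f v) + card B" unfolding sum.distrib by simp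
  ultimately have SB: "(\<Sum>v\<in>B. f v) + card B \<le> n" by simp
  have S: "(\<Sum>v<n. f v) = (\<Sum>v\<in>B. f v)"
    by (rule sum.mono_neutral_right) (use Bsub in \<open>auto simp: B_def\<close>)
  have F3: "f v \<le> n div 2 - 1" if "2 \<le> card B" "v \<in> B" for v
  proof -
    have "card (B - {v}) \<ge> 1" using that finB by simp
    then have "B - {v} \<noteq> {}" by (metis card.empty not_one_le_zero)
    then obtain w where w: "w \<in> B" "w \<noteq> v" by blast
    have "Pr w (pu w)" using pu w by blast
    then have "f v < cd n (pu w) v" using that w unfolding Pr_def B_def by auto
    then show ?thesis using cd_le[of n "pu w" v] by linarith
  qed
  have n2: "n = 2 * (n div 2) + n mod 2" "n mod 2 < 2" by simp_all
  consider "card B = 0" | "card B = 1" | "card B = 2" | "card B \<ge> 3" by linarith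
  then show ?thesis
  proof cases
    case 1
    then have "B = {}" using finB by simp
    then show ?thesis using S by simp
  next
    case 2
    then obtain v where "B = {v}" by (meson card_1_singletonE)
    then have "(\<Sum>v<n. f v) = f v" "f v \<le> n div 2" using S Bd Bsub by auto
    then show ?thesis using target_bounds(1)[OF n] by linarith
  next
    case 3
    have "(\<Sum>v\<in>B. f v) \<le> of_nat (card B) * (n div 2 - 1)"
      by (rule sum_bounded_above) (use F3 3 in auto)
    then have "(\<Sum>v<n. f v) \<le> 2 * (n div 2 - 1)" using S 3 by simp
    then show ?thesis using target_bounds(2)[OF n] by linarith
  next
    case 4
    then show ?thesis using SB S target_bounds(3)[OF n] by linarith
  qed
qed

lemma sum2: assumes "a < (n::nat)" "b < n" "a \<noteq> b"
  shows "(\<Sum>v<n. if v = a \<or> v = b then (k::nat) else 0) = 2 * k"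
proof -
  have "(\<Sum>v<n. if v = a \<or> v = b then k else 0) = (\<Sum>v<n. (if v = a then k else 0) + (if v = b then k else 0))"
    using assms(3) by (intro sum.cong) auto
  also have "\<dots> = (\<Sum>v<n. if v = a then k else 0) + (\<Sum>v<n. if v = b then k else 0)"
    by (rule sum.distrib)
  also have "\<dots> = 2 * k" using assms(1,2) by simp
  finally show ?thesis .
qed

lemma even_mdb:
  fixes k :: nat assumes k: "1 \<le> k"
  shows "minimal_dominating_broadcast {..<2*k+2} (cycle_adj (2*k+2)) (\<lambda>v. if v = 0 \<or> v = 1 then k else 0)"
proof -
  define n where "n = 2*k+2"
  define f where "f = (\<lambda>v::nat. if v = 0 \<or> v = 1 then k else 0)"
  have n0: "0 < n" unfolding n_def by simp
  have nd: "n div 2 = k + 1" unfolding n_def by simp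
  have DD: "u < n \<Longrightarrow> \<not> cd n u 0 \<le> k \<Longrightarrow> cd n u 1 \<le> k" for u
    using k unfolding n_def cd_def min_def by (simp split: if_splits; arith)
  have C: "cd n (k+2) 0 = k \<and> cd n (k+2) 1 = k+1 \<and> cd n (k+1) 1 = k \<and> cd n (k+1) 0 = k+1"
    using k unfolding n_def cd_def min_def by (simp split: if_splits; arith)
  have D: "dominating_broadcast {..<n} (cycle_adj n) f"
    unfolding dom_iff[OF n0]
  proof (intro conjI allI impI)
    fix v assume "v < n" show "f v \<le> n div 2" unfolding f_def nd by simp
  next
    fix v assume "\<not> v < n" then show "f v = 0" unfolding f_def n_def by simp
  next
    fix u assume u: "u < n"
    show "\<exists>v<n. 1 \<le> f v \<and> cd n u v \<le> f v"
    proof (cases "cd n u 0 \<le> k")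
      case True then show ?thesis using k n0 unfolding f_def by (intro exI[of _ 0]) auto
    next
      case False then have "cd n u 1 \<le> k" using u DD by blast
      then show ?thesis using k unfolding f_def n_def by (intro exI[of _ 1]) auto
    qed
  qed
  have M: "\<not> dominating_broadcast {..<n} (cycle_adj n) (f(v := c))" if "v < n" "0 < f v" "c < f v" for v c
  proof -
    have v: "v = 0 \<or> v = 1" and fv: "f v = k" using that unfolding f_def by (auto split: if_splits)
    define u where "u = (if v = 0 then k+2 else k+1)"
    have un: "u < n" unfolding u_def n_def using k by auto
    have cu: "cd n u v = k" and co: "\<And>w. w \<noteq> v \<Longrightarrow> w = 0 \<or> w = 1 \<Longrightarrow> cd n u w = k+1"
      using v C unfolding u_def by auto
    have "\<forall>w<n. \<not> (1 \<le> (f(v:=c)) w \<and> cd n u w \<le> (f(v:=c)) w)"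
    proof (intro allI impI)
      fix w assume "w < n"
      show "\<not> (1 \<le> (f(v:=c)) w \<and> cd n u w \<le> (f(v:=c)) w)"
      proof (cases "w = v")
        case True then show ?thesis using cu that(3) fv by simp
      next
        case False then show ?thesis using co[OF False] unfolding f_def by auto
      qed
    qed
    then show ?thesis unfolding dom_iff[OF n0] using un by blast
  qed
  show ?thesis unfolding minimal_dominating_broadcast_def using D M n_def f_def by blast
qed

lemma odd_mdb:
  fixes k :: nat assumes k: "1 \<le> k"
  shows "minimal_dominating_broadcast {..<2*k+3} (cycle_adj (2*k+3)) (\<lambda>v. if v = 0 \<or> v = 2 then k else 0)"
proof -
  define n where "n = 2*k+3"
  define f where "f = (\<lambda>v::nat. if v = 0 \<or> v = 2 then k else 0)"
  have n0: "0 < n" unfolding n_def by simp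
  have nd: "n div 2 = k + 1" unfolding n_def by simp
  have DD: "u < n \<Longrightarrow> \<not> cd n u 0 \<le> k \<Longrightarrow> cd n u 2 \<le> k" for u
    using k unfolding n_def cd_def min_def by (simp split: if_splits; arith)
  have C: "cd n (k+3) 0 = k \<and> cd n (k+3) 2 = k+1 \<and> cd n (k+2) 2 = k \<and> cd n (k+2) 0 = k+1"
    using k unfolding n_def cd_def min_def by (simp split: if_splits; arith)
  have D: "dominating_broadcast {..<n} (cycle_adj n) f"
    unfolding dom_iff[OF n0]
  proof (intro conjI allI impI)
    fix v assume "v < n" show "f v \<le> n div 2" unfolding f_def nd by simp
  next
    fix v assume "\<not> v < n" then show "f v = 0" unfolding f_def n_def by simp
  next
    fix u assume u: "u < n"
    show "\<exists>v<n. 1 \<le> f v \<and> cd n u v \<le> f v"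
    proof (cases "cd n u 0 \<le> k")
      case True then show ?thesis using k n0 unfolding f_def by (intro exI[of _ 0]) auto
    next
      case False then have "cd n u 2 \<le> k" using u DD by blast
      then show ?thesis using k unfolding f_def n_def by (intro exI[of _ 2]) auto
    qed
  qed
  have M: "\<not> dominating_broadcast {..<n} (cycle_adj n) (f(v := c))" if "v < n" "0 < f v" "c < f v" for v c
  proof -
    have v: "v = 0 \<or> v = 2" and fv: "f v = k" using that unfolding f_def by (auto split: if_splits)
    define u where "u = (if v = 0 then k+3 else k+2)"
    have un: "u < n" unfolding u_def n_def using k by auto
    have cu: "cd n u v = k" and co: "\<And>w. w \<noteq> v \<Longrightarrow> w = 0 \<or> w = 2 \<Longrightarrow> cd n u w = k+1"
      using v C unfolding u_def by auto
    have "\<forall>w<n. \<not> (1 \<le> (f(v:=c)) w \<and> cd n u w \<le> (f(v:=c)) w)"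
    proof (intro allI impI)
      fix w assume "w < n"
      show "\<not> (1 \<le> (f(v:=c)) w \<and> cd n u w \<le> (f(v:=c)) w)"
      proof (cases "w = v")
        case True then show ?thesis using cu that(3) fv by simp
      next
        case False then show ?thesis using co[OF False] unfolding f_def by auto
      qed
    qed
    then show ?thesis unfolding dom_iff[OF n0] using un by blast
  qed
  show ?thesis unfolding minimal_dominating_broadcast_def using D M n_def f_def by blast
qed

lemma three_mdb:
  shows "minimal_dominating_broadcast {..<3} (cycle_adj 3) (\<lambda>v. if v = 0 then 1 else 0)"
proof -
  have n0: "0 < (3::nat)" by simp
  have D: "dominating_broadcast {..<3} (cycle_adj 3) (\<lambda>v::nat. if v = 0 then 1 else 0)"
    unfolding dom_iff[OF n0] by (auto simp: cd_def intro!: exI[of _ 0])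
  have M: "\<not> dominating_broadcast {..<3} (cycle_adj 3) ((\<lambda>v::nat. if v = 0 then 1 else 0)(v := c))"
    if "v < 3" "0 < (\<lambda>v::nat. if v = 0 then 1 else 0) v" "c < (\<lambda>v::nat. if v = 0 then 1 else (0::nat)) v" for v c
    using that unfolding dom_iff[OF n0] by (auto split: if_splits intro: exI[of _ "0::nat"])
  show ?thesis unfolding minimal_dominating_broadcast_def using D M by blast
qed

theorem mainTheorem4:
  fixes n :: nat
  assumes "n \<ge> 3"
  shows "upper_broadcast_number {..<n} (cycle_adj n) =
           (if n = 3 then 1 else if even n then n - 2 else n - 3)"
proof -
  define T where "T = (if n = 3 then 1 else if even n then n - 2 else n - (3::nat))"
  define A where "A = bcost {..<n} ` {f. minimal_dominating_broadcast {..<n} (cycle_adj n) f}"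
  have n0: "0 < n" using assms by simp
  have up: "y \<le> T" if yA: "y \<in> A" for y
  proof -
    obtain f where f: "minimal_dominating_broadcast {..<n} (cycle_adj n) f" and y: "y = bcost {..<n} f"
      using yA unfolding A_def by auto
    have "(\<forall>v<n. f v \<le> n div 2) \<and> (\<forall>v. \<not> v < n \<longrightarrow> f v = 0) \<and>
    (\<forall>v<n. 1 \<le> f v \<longrightarrow> (\<exists>u<n. cd n u v \<le> f v \<and>
        (\<forall>w<n. w \<noteq> v \<longrightarrow> 1 \<le> f w \<longrightarrow> f w < cd n u w) \<and> (2 \<le> f v \<longrightarrow> cd n u v = f v)))"
      by (rule mdb_props[OF n0 f])
    then have "(\<Sum>v<n. f v) \<le> T" unfolding T_def using core[OF assms, of f] by blast
    then show ?thesis unfolding y bcost_def .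
  qed
  have fin: "finite A" using up by (intro finite_subset[of A "{..T}"]) auto
  have mem: "T \<in> A"
  proof (cases "n = 3")
    case True
    have "minimal_dominating_broadcast {..<n} (cycle_adj n) (\<lambda>v. if v = 0 then 1 else 0)"
      using three_mdb True by simp
    moreover have "bcost {..<n} (\<lambda>v::nat. if v = 0 then 1 else 0) = T"
      unfolding bcost_def T_def using True by simp
    ultimately show ?thesis unfolding A_def by (metis (mono_tags, lifting) mem_Collect_eq rev_image_eqI)
  next
    case n3: False
    show ?thesis
    proof (cases "even n")
      case True
      then obtain q where q: "n = 2 * q" by (rule evenE)
      then have "q \<ge> 2" using assms n3 by linarith
      define k where "k = q - 1"
      have nk: "n = 2 * k + 2" and k: "1 \<le> k" using q \<open>q \<ge> 2\<close> unfolding k_def by auto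
      have "minimal_dominating_broadcast {..<n} (cycle_adj n) (\<lambda>v. if v = 0 \<or> v = 1 then k else 0)"
        using even_mdb[OF k] nk by simp
      moreover have "bcost {..<n} (\<lambda>v::nat. if v = 0 \<or> v = 1 then k else 0) = T"
        unfolding bcost_def T_def using sum2[of 0 n 1 k] nk True n3 by simp
      ultimately show ?thesis unfolding A_def by (metis (mono_tags, lifting) mem_Collect_eq rev_image_eqI)
    next
      case False
      then obtain q where q: "n = 2 * q + 1" by (rule oddE)
      then have "q \<ge> 2" using assms n3 by linarith
      define k where "k = q - 1"
      have nk: "n = 2 * k + 3" and k: "1 \<le> k" using q \<open>q \<ge> 2\<close> unfolding k_def by auto
      have "minimal_dominating_broadcast {..<n} (cycle_adj n) (\<lambda>v. if v = 0 \<or> v = 2 then k else 0)"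
        using odd_mdb[OF k] nk by simp
      moreover have "bcost {..<n} (\<lambda>v::nat. if v = 0 \<or> v = 2 then k else 0) = T"
        unfolding bcost_def T_def using sum2[of 0 n 2 k] nk False n3 by simp
      ultimately show ?thesis unfolding A_def by (metis (mono_tags, lifting) mem_Collect_eq rev_image_eqI)
    qed
  qed
  have "Max A = T" by (rule Max_eqI[OF fin up mem])
  then show ?thesis unfolding upper_broadcast_number_def A_def T_def by simp
qed

end
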